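(* Let $\mathcal{H}$ be a hypothesis class and $k\ge0$, $m\ge1$ integers. (i) $\mathrm{ELdim}(\mathcal{H},0)\ge m$ if and only if there exist $x\in\mathcal{X}$ and $y\in\{-1,+1\}$ such that $x\in\mathrm{DIS}(\mathcal{H})$ and $\mathrm{ELdim}(\mathcal{H}[(x,y)],0)\ge m-1$. (ii) If $k\ge1$, then $\mathrm{ELdim}(\mathcal{H},k)\ge m$ if and only if there exist $x\in\mathcal{X}$ and $y\in\{-1,+1\}$ such that both $\mathrm{ELdim}(\mathcal{H}[(x,y)],k)\ge m-1$ and $\mathrm{ELdim}(\mathcal{H}[(x,-y)],k-1)\ge m-1$.
   Context: Hypotheses are maps $\mathcal{X}\to\{-1,+1\}$; $\mathcal{H}[(x,y)]=\{h\in\mathcal{H}:h(x)=y\}$; $x\in\mathrm{DIS}(\mathcal{H})$ means both $\mathcal{H}[(x,+1)]$ and $\mathcal{H}[(x,-1)]$ are nonempty. Extended mistake tree w.r.t. $\mathcal{H}$: a finite full binary tree (possibly a single leaf) in which each internal node $v$ is labeled by $x_v\in\mathcal{X}$ and has two solid downward edges, to its left child (label $-1$) and right child (label $+1$), plus one dashed downward edge to one of its two children; each leaf is labeled by some $h\in\mathcal{H}$ with $h(x_v)$ equal to the direction label at every internal node $v$ on the root-to-leaf path. A root-to-leaf path chooses at each internal node one downward edge; its length is its number of edges. The tree is $(k,m)$-difficult if every root-to-leaf path using at most $k$ solid edges has length at least $m$. $\mathrm{ELdim}(\mathcal{H},k)$ is the supremum of $m$ such that a $(k,m)$-difficult extended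 mistake tree w.r.t. $\mathcal{H}$ exists (for empty $\mathcal{H}$ no tree exists and $\mathrm{ELdim}<0$). *)

theory Defs
  imports "HOL-Library.Extended_Real"
begin

text \<open>Hypotheses are functions 'x => int taking values in {-1,1}.
  Restriction H[(x,y)] and disagreement region DIS(H).\<close>

definition restr :: "('x \<Rightarrow> int) set \<Rightarrow> 'x \<Rightarrow> int \<Rightarrow> ('x \<Rightarrow> int) set" where
  "restr H x y = {h \<in> H. h x = y}"

definition DIS :: "('x \<Rightarrow> int) set \<Rightarrow> 'x set" where
  "DIS H = {x. restr H x 1 \<noteq> {} \<and> restr H x (-1) \<noteq> {}}"

text \<open>Extended mistake trees: a leaf labelled by a hypothesis, or an internal node
  labelled by a point x, with a flag telling whether the dashed edge goes to the
  right child (label +1) or to the left child (label -1), a left child and a right child.\<close>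

datatype ('x, 'h) emtree = Leaf 'h | Node 'x bool "('x, 'h) emtree" "('x, 'h) emtree"

fun valid_tree :: "('x \<Rightarrow> int) set \<Rightarrow> ('x, 'x \<Rightarrow> int) emtree \<Rightarrow> bool" where
  "valid_tree H (Leaf h) = (h \<in> H)"
| "valid_tree H (Node x d l r) = (valid_tree (restr H x (-1)) l \<and> valid_tree (restr H x 1) r)"

text \<open>Root-to-leaf paths, recorded as pairs (number of solid edges used, length).\<close>

fun paths :: "('x, 'h) emtree \<Rightarrow> (nat \<times> nat) set" where
  "paths (Leaf h) = {(0, 0)}"
| "paths (Node x d l r) =
     {(s, Suc n) | s n. (s, n) \<in> paths (if d then r else l)}
   \<union> {(Suc s, Suc n) | s n. (s, n) \<in> paths l}
   \<union> {(Suc s, Suc n) | s n. (s, n) \<in> paths r}"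

definition difficult :: "('x, 'h) emtree \<Rightarrow> nat \<Rightarrow> nat \<Rightarrow> bool" where
  "difficult t k m = (\<forall>(s, n) \<in> paths t. s \<le> k \<longrightarrow> m \<le> n)"

text \<open>ELdim(H,k): supremum (in the extended reals) of all m such that a (k,m)-difficult
  extended mistake tree w.r.t. H exists; it is -infinity (< 0) if no tree exists,
  i.e. if H is empty.\<close>

definition ELdim :: "('x \<Rightarrow> int) set \<Rightarrow> nat \<Rightarrow> ereal" where
  "ELdim H k = Sup {ereal (real m) | m. \<exists>t. valid_tree H t \<and> difficult t k m}"

end

theory Submission
  imports Defs
begin

lemma difficult_mono: "difficult t k m \<Longrightarrow> m' \<le> m \<Longrightarrow> difficult t k m'"
  unfolding difficult_def by fastforce

lemma valid_ne: "valid_tree H t \<Longrightarrow> H \<noteq> {}"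
  by (induction t arbitrary: H) (auto simp: restr_def)

lemma ELdim_ge: "(ELdim H k \<ge> ereal (real m)) \<longleftrightarrow> (\<exists>t. valid_tree H t \<and> difficult t k m)"
proof
  assume a: "ELdim H k \<ge> ereal (real m)"
  show "\<exists>t. valid_tree H t \<and> difficult t k m"
  proof (rule ccontr)
    assume n: "\<not> ?thesis"
    have "ELdim H k \<le> ereal (real m - 1)"
      unfolding ELdim_def
    proof (rule Sup_least)
      fix z assume "z \<in> {ereal (real m) |m. \<exists>t. valid_tree H t \<and> difficult t k m}"
      then obtain m' t where z: "z = ereal (real m')" and t: "valid_tree H t" "difficult t k m'" by blast
      have "m' < m" using n t difficult_mono[of t k m' m] by (cases "m \<le> m'") auto
      then show "z \<le> ereal (real m - 1)" using z by simp
    qed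
    from order_trans[OF a this] show False by simp
  qed
next
  assume "\<exists>t. valid_tree H t \<and> difficult t k m"
  then show "ELdim H k \<ge> ereal (real m)"
    unfolding ELdim_def by (intro Sup_upper) blast
qed

lemma ELdim_ge1: "m \<ge> 1 \<Longrightarrow> (ELdim H k \<ge> ereal (real m - 1)) \<longleftrightarrow> (\<exists>t. valid_tree H t \<and> difficult t k (m - 1))"
  using ELdim_ge[of "m - 1" H k] by (simp add: of_nat_diff)


lemma diff_leaf: "difficult (Leaf h) k m \<longleftrightarrow> m = 0"
  unfolding difficult_def by auto

lemma pd: "(s, n) \<in> paths (if d then r else l) \<Longrightarrow> (s, Suc n) \<in> paths (Node x d l r)"
  unfolding paths.simps by blast
lemma pl: "(s, n) \<in> paths l \<Longrightarrow> (Suc s, Suc n) \<in> paths (Node x d l r)"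
  unfolding paths.simps by blast
lemma pr: "(s, n) \<in> paths r \<Longrightarrow> (Suc s, Suc n) \<in> paths (Node x d l r)"
  unfolding paths.simps by blast

lemma dash: assumes "difficult (Node x d l r) k m" shows "difficult (if d then r else l) k (m - 1)"
  unfolding difficult_def
proof (clarify)
  fix s n assume p: "(s, n) \<in> paths (if d then r else l)" and sk: "s \<le> k"
  have "(s, Suc n) \<in> paths (Node x d l r)" by (rule pd[OF p])
  then have "m \<le> Suc n" using assms sk unfolding difficult_def by blast
  then show "m - 1 \<le> n" by simp
qed

lemma solid_l: assumes "difficult (Node x d l r) k m" and k1: "k \<ge> 1" shows "difficult l (k - 1) (m - 1)"
  unfolding difficult_def
proof (clarify)
  fix s n assume p: "(s, n) \<in> paths l" and sk: "s \<le> k - 1"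
  show "m - 1 \<le> n"
  proof (cases "k = 0")
    case True
    then show ?thesis using k1 by simp
  next
    case False
    have "(Suc s, Suc n) \<in> paths (Node x d l r)" by (rule pl[OF p])
    moreover have "Suc s \<le> k" using sk False by simp
    ultimately have "m \<le> Suc n" using assms unfolding difficult_def by blast
    then show ?thesis by simp
  qed
qed

lemma solid_r: assumes "difficult (Node x d l r) k m" and k1: "k \<ge> 1" shows "difficult r (k - 1) (m - 1)"
  unfolding difficult_def
proof (clarify)
  fix s n assume p: "(s, n) \<in> paths r" and sk: "s \<le> k - 1"
  show "m - 1 \<le> n"
  proof (cases "k = 0")
    case True
    then show ?thesis using k1 by simp
  next
    case False
    have "(Suc s, Suc n) \<in> paths (Node x d l r)" by (rule pr[OF p])
    moreover have "Suc s \<le> k" using sk False by simp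
    ultimately have "m \<le> Suc n" using assms unfolding difficult_def by blast
    then show ?thesis by simp
  qed
qed

lemma build: assumes a1: "difficult (if d then r else l) k (m - 1)"
  and a2: "k \<ge> 1 \<Longrightarrow> difficult l (k - 1) (m - 1)" and a3: "k \<ge> 1 \<Longrightarrow> difficult r (k - 1) (m - 1)"
  shows "difficult (Node x d l r) k m"
  unfolding difficult_def
proof (clarify)
  fix s n assume p: "(s, n) \<in> paths (Node x d l r)" and sk: "s \<le> k"
  from p consider (D) n' where "(s, n') \<in> paths (if d then r else l)" "n = Suc n'"
    | (L) s' n' where "(s', n') \<in> paths l" "s = Suc s'" "n = Suc n'"
    | (R) s' n' where "(s', n') \<in> paths r" "s = Suc s'" "n = Suc n'"
    unfolding paths.simps by blast
  then show "m \<le> n"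
  proof cases
    case D
    then have "m - 1 \<le> n'" using a1 sk unfolding difficult_def by blast
    then show ?thesis using D by simp
  next
    case L
    then have "k \<ge> 1" "s' \<le> k - 1" using sk by auto
    then have "m - 1 \<le> n'" using a2 L unfolding difficult_def by blast
    then show ?thesis using L by simp
  next
    case R
    then have "k \<ge> 1" "s' \<le> k - 1" using sk by auto
    then have "m - 1 \<le> n'" using a3 R unfolding difficult_def by blast
    then show ?thesis using R by simp
  qed
qed

lemma leaf_not: "m \<ge> 1 \<Longrightarrow> \<not> difficult (Leaf h) k m"
  unfolding difficult_def by simp

lemma restr_sub: "restr H x y \<subseteq> H" unfolding restr_def by auto

lemma restr_vt: "h \<in> restr H x y \<Longrightarrow> valid_tree (restr H x y) (Leaf h)" by simp

theorem mainTheorem20: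
  fixes H :: "('x \<Rightarrow> int) set" and k m :: nat
  assumes hyp: "\<forall>h\<in>H. \<forall>x. h x \<in> {-1, 1}"
    and m1: "m \<ge> 1"
  shows "(ELdim H 0 \<ge> ereal (real m) \<longleftrightarrow>
           (\<exists>x y. y \<in> {-1, 1} \<and> x \<in> DIS H \<and>
                  ELdim (restr H x y) 0 \<ge> ereal (real m - 1)))
       \<and> (k \<ge> 1 \<longrightarrow>
           (ELdim H k \<ge> ereal (real m) \<longleftrightarrow>
             (\<exists>x y. y \<in> {-1, 1} \<and>
                    ELdim (restr H x y) k \<ge> ereal (real m - 1) \<and>
                    ELdim (restr H x (-y)) (k - 1) \<ge> ereal (real m - 1))))"
proof (intro conjI impI)
  show "(ELdim H 0 \<ge> ereal (real m) \<longleftrightarrow>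
           (\<exists>x y. y \<in> {-1, 1} \<and> x \<in> DIS H \<and>
                  ELdim (restr H x y) 0 \<ge> ereal (real m - 1)))"
  proof
    assume "ELdim H 0 \<ge> ereal (real m)"
    then obtain t where t: "valid_tree H t" "difficult t 0 m" using ELdim_ge by blast
    then obtain x d l r where tn: "t = Node x d l r" using leaf_not[OF m1] by (metis emtree.exhaust)
    have vl: "valid_tree (restr H x (-1)) l" and vr: "valid_tree (restr H x 1) r" using t tn by auto
    have dis: "x \<in> DIS H" unfolding DIS_def using valid_ne[OF vl] valid_ne[OF vr] by blast
    define y :: int where "y = (if d then 1 else -1)"
    have yin: "y \<in> {-1, 1}" unfolding y_def by auto
    have "valid_tree (restr H x y) (if d then r else l)" using vl vr y_def by auto
    moreover have "difficult (if d then r else l) 0 (m - 1)" using t(2) unfolding tn by (rule dash)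
    ultimately have "ELdim (restr H x y) 0 \<ge> ereal (real m - 1)" using ELdim_ge1[OF m1] by blast
    then show "\<exists>x y. y \<in> {-1, 1} \<and> x \<in> DIS H \<and> ELdim (restr H x y) 0 \<ge> ereal (real m - 1)"
      using dis yin by blast
  next
    assume "\<exists>x y. y \<in> {-1, 1} \<and> x \<in> DIS H \<and> ELdim (restr H x y) 0 \<ge> ereal (real m - 1)"
    then obtain x y where y: "y \<in> {-1, 1}" and dis: "x \<in> DIS H"
      and e: "ELdim (restr H x y) 0 \<ge> ereal (real m - 1)" by blast
    obtain t where t: "valid_tree (restr H x y) t" "difficult t 0 (m - 1)" using e ELdim_ge1[OF m1] by blast
    obtain h where h: "h \<in> restr H x (-y)" using dis y unfolding DIS_def by auto
    define d where "d = (y = 1)"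
    define T where "T = (if d then Node x d (Leaf h) t else Node x d t (Leaf h))"
    have "valid_tree H T" using t h y unfolding T_def d_def by auto
    moreover have "difficult T 0 m" unfolding T_def using t by (auto intro!: build)
    ultimately show "ELdim H 0 \<ge> ereal (real m)" using ELdim_ge by blast
  qed
next
  assume k1: "k \<ge> 1"
  show "ELdim H k \<ge> ereal (real m) \<longleftrightarrow>
             (\<exists>x y. y \<in> {-1, 1} \<and>
                    ELdim (restr H x y) k \<ge> ereal (real m - 1) \<and>
                    ELdim (restr H x (-y)) (k - 1) \<ge> ereal (real m - 1))"
  proof
    assume "ELdim H k \<ge> ereal (real m)"
    then obtain t where t: "valid_tree H t" "difficult t k m" using ELdim_ge by blast
    then obtain x d l r where tn: "t = Node x d l r" using leaf_not[OF m1] by (metis emtree.exhaust)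
    have vl: "valid_tree (restr H x (-1)) l" and vr: "valid_tree (restr H x 1) r" using t tn by auto
    define y :: int where "y = (if d then 1 else -1)"
    have yin: "y \<in> {-1, 1}" unfolding y_def by auto
    have "valid_tree (restr H x y) (if d then r else l)" using vl vr y_def by auto
    moreover have "difficult (if d then r else l) k (m - 1)" using t(2) unfolding tn by (rule dash)
    ultimately have e1: "ELdim (restr H x y) k \<ge> ereal (real m - 1)" using ELdim_ge1[OF m1] by blast
    have "valid_tree (restr H x (-y)) (if d then l else r)" using vl vr y_def by auto
    moreover have "difficult (if d then l else r) (k - 1) (m - 1)"
      using solid_l[OF _ k1] solid_r[OF _ k1] t tn by auto
    ultimately have e2: "ELdim (restr H x (-y)) (k - 1) \<ge> ereal (real m - 1)" using ELdim_ge1[OF m1] by blast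
    show "\<exists>x y. y \<in> {-1, 1} \<and> ELdim (restr H x y) k \<ge> ereal (real m - 1) \<and>
                    ELdim (restr H x (-y)) (k - 1) \<ge> ereal (real m - 1)"
      using e1 e2 yin by blast
  next
    assume "\<exists>x y. y \<in> {-1, 1} \<and> ELdim (restr H x y) k \<ge> ereal (real m - 1) \<and>
                    ELdim (restr H x (-y)) (k - 1) \<ge> ereal (real m - 1)"
    then obtain x y where y: "y \<in> {-1, 1}"
      and e: "ELdim (restr H x y) k \<ge> ereal (real m - 1)"
      and e2: "ELdim (restr H x (-y)) (k - 1) \<ge> ereal (real m - 1)" by blast
    obtain t where t: "valid_tree (restr H x y) t" "difficult t k (m - 1)" using e ELdim_ge1[OF m1] by blast
    obtain t2 where t2: "valid_tree (restr H x (-y)) t2" "difficult t2 (k - 1) (m - 1)" using e2 ELdim_ge1[OF m1] by blast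
    have tk: "difficult t (k - 1) (m - 1)" using t(2) unfolding difficult_def by fastforce
    define d where "d = (y = 1)"
    define T where "T = (if d then Node x d t2 t else Node x d t t2)"
    have "valid_tree H T" using t t2 y unfolding T_def d_def by auto
    moreover have "difficult T k m" unfolding T_def using t t2 tk by (auto intro!: build)
    ultimately show "ELdim H k \<ge> ereal (real m)" using ELdim_ge by blast
  qed
qed

end
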